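(* Let $X_1\in\mathbb{R}^{n_1\times d}$ and $X_2\in\mathbb{R}^{n_2\times d}$ be two data matrices with $\|X_1\|,\|X_2\|\le 1$ and $\operatorname{rank}(X_m)<d$, and consider the two tasks fitted in the identity ordering ($\tau(1)=1$, $\tau(2)=2$). The following are equivalent: (1) For every choice of labels $y_1,y_2$ such that $S=\{(X_1,y_1),(X_2,y_2)\}\in\mathcal{S}_2$ (equivalently, for every minimum-norm solution $w^\star$), $F_{\tau,S}(2)=0$. (2) $X_1P_2P_1=0_{n_1\times d}$. (3) Every principal angle between $\mathrm{range}(X_1^\top)$ and $\mathrm{range}(X_2^\top)$ is either $0$ or $\pi/2$.
   Context: Let $d\ge 1$, $T\ge1$. A task is a pair $(X_m,y_m)$ with $X_m\in\mathbb{R}^{n_m\times d}$, $y_m\in\mathbb{R}^{n_m}$ and $\operatorname{rank}(X_m)<d$. $\mathcal{S}_T$ denotes the set of collections $S=\{(X_m,y_m)\}_{m=1}^T$ of $T$ tasks such that $\|X_m\|\le 1$ (spectral norm) for all $m$ and there exists $w\in\mathbb{R}^d$ with $\|w\|\le 1$ and $y_m=X_mw$ for all $m$. A task ordering is a map $\tau:\mathbb{N}^+\to\{1,\dots,T\}$. Given $S$ and $\tau$, the iterates are $w_0=0$ and $w_t=w_{t-1}+X_{\tau(t)}^+(y_{\tau(t)}-X_{\tau(t)}w_{t-1})$ for $t\ge1$, where $A^+$ is the Moore–Penrose pseudoinverse (equivalently, $w_t$ is the Euclidean projection of $w_{t-1}$ onto $\{w: X_{\tau(t)}w=y_{\tau(t)}\}$).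 The forgetting at iteration $k$ is $F_{\tau,S}(k)=\frac1k\sum_{t=1}^k\|X_{\tau(t)}w_k-y_{\tau(t)}\|^2$. $w^\star$ denotes the minimum Euclidean-norm vector with $X_mw^\star=y_m$ for all $m$. $P_m=I-X_m^+X_m$ is the orthogonal projection onto $\ker X_m$. Principal angles: for data matrices $X_1,X_2$ let $r=\min(\operatorname{rank}X_1,\operatorname{rank}X_2)$. The principal angles $0\le\theta_1\le\dots\le\theta_r\le\pi/2$ between $\mathrm{range}(X_1^\top)$ and $\mathrm{range}(X_2^\top)$ are defined recursively by $\cos\theta_i=|u_i^\top v_i|$, where $(u_i,v_i)$ maximizes $|u^\top v|$ over unit vectors $u\in\mathrm{range}(X_1^\top)$, $v\in\mathrm{range}(X_2^\top)$ with $u\perp u_j$, $v\perp v_j$ for all $j<i$. *)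

theory Defs
  imports "HOL-Analysis.Analysis"
begin

definition pinv :: "real^'d^'n \<Rightarrow> real^'n^'d" where
  "pinv A = (THE B. A ** B ** A = A \<and> B ** A ** B = B \<and>
                    transpose (A ** B) = A ** B \<and> transpose (B ** A) = B ** A)"

definition kerproj :: "real^'d^'n \<Rightarrow> real^'d^'d" where
  "kerproj X = mat 1 - pinv X ** X"

definition specnorm :: "real^'d^'n \<Rightarrow> real" where
  "specnorm X = onorm (\<lambda>x. X *v x)"

definition cl_step :: "real^'d^'n \<Rightarrow> real^'n \<Rightarrow> real^'d \<Rightarrow> real^'d" where
  "cl_step X y w = w + pinv X *v (y - X *v w)"

text \<open>Iterates w_0 = 0, w_1, w_2 for two tasks in the identity ordering tau(1)=1, tau(2)=2.\<close>
definition iter2 :: "real^'d^'n1 \<Rightarrow> real^'n1 \<Rightarrow> real^'d^'n2 \<Rightarrow> real^'n2 \<Rightarrow> real^'d" where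
  "iter2 X1 y1 X2 y2 = cl_step X2 y2 (cl_step X1 y1 0)"

definition forgetting2 :: "real^'d^'n1 \<Rightarrow> real^'n1 \<Rightarrow> real^'d^'n2 \<Rightarrow> real^'n2 \<Rightarrow> real" where
  "forgetting2 X1 y1 X2 y2 =
     (let w = iter2 X1 y1 X2 y2 in
      (1 / 2) * ((norm (X1 *v w - y1))\<^sup>2 + (norm (X2 *v w - y2))\<^sup>2))"

definition in_S2 :: "real^'d^'n1 \<Rightarrow> real^'n1 \<Rightarrow> real^'d^'n2 \<Rightarrow> real^'n2 \<Rightarrow> bool" where
  "in_S2 X1 y1 X2 y2 \<longleftrightarrow>
     specnorm X1 \<le> 1 \<and> specnorm X2 \<le> 1 \<and>
     (\<exists>w. norm w \<le> 1 \<and> y1 = X1 *v w \<and> y2 = X2 *v w)"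

definition rowspace :: "real^'d^'n \<Rightarrow> (real^'d) set" where
  "rowspace X = range (\<lambda>z. transpose X *v z)"

definition principal_vectors ::
  "(real^'d) set \<Rightarrow> (real^'d) set \<Rightarrow> nat \<Rightarrow> (nat \<Rightarrow> real^'d) \<Rightarrow> (nat \<Rightarrow> real^'d) \<Rightarrow> bool" where
  "principal_vectors U V r u v \<longleftrightarrow>
     (\<forall>i<r. u i \<in> U \<and> v i \<in> V \<and> norm (u i) = 1 \<and> norm (v i) = 1 \<and>
        (\<forall>j<i. u i \<bullet> u j = 0 \<and> v i \<bullet> v j = 0) \<and>
        (\<forall>x y. x \<in> U \<and> y \<in> V \<and> norm x = 1 \<and> norm y = 1 \<and>
               (\<forall>j<i. x \<bullet> u j = 0 \<and> y \<bullet> v j = 0) \<longrightarrow> \<bar>x \<bullet> y\<bar> \<le> \<bar>u i \<bullet> v i\<bar>))"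

definition principal_angles :: "real^'d^'n1 \<Rightarrow> real^'d^'n2 \<Rightarrow> real list" where
  "principal_angles X1 X2 =
     (let r = min (rank X1) (rank X2);
          uv = (SOME uv. principal_vectors (rowspace X1) (rowspace X2) r (fst uv) (snd uv))
      in map (\<lambda>i. arccos \<bar>fst uv i \<bullet> snd uv i\<bar>) [0..<r])"

end

theory Submission imports Defs begin


definition isproj :: "(real^'n) set \<Rightarrow> real^'n^'n \<Rightarrow> bool" where
  "isproj S P \<longleftrightarrow> (\<forall>x. P *v x \<in> S) \<and> (\<forall>x y. y \<in> S \<longrightarrow> (x - P *v x) \<bullet> y = 0)"

lemma vec_eq_by_inner: fixes a b :: "real^'n"
  assumes "\<And>x. a \<bullet> x = b \<bullet> x" shows "a = b"
proof -
  have "(a - b) \<bullet> (a - b) = 0" using assms[of "a-b"] by (simp add: inner_diff_left)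
  thus ?thesis by simp
qed

lemma transpose_inner: "(transpose A *v x) \<bullet> y = x \<bullet> (A *v (y::real^'n))"
  by (simp add: dot_lmul_matrix)

lemma isproj_exists:
  fixes S :: "(real^'n) set" assumes S: "subspace S"
  shows "\<exists>P. isproj S P"
proof -
  obtain B where "B \<subseteq> S"
    and ortho: "pairwise orthogonal B" "\<And>x. x \<in> B \<Longrightarrow> norm x = 1"
    and "independent B" "card B = dim S" "span B = S"
    using orthonormal_basis_subspace [OF S] by metis
  then have "finite B"
    by (simp add: indep_card_eq_dim_span)
  have *: "\<forall>x\<in>B. \<forall>y\<in>B. x \<bullet> y = (if x=y then 1 else 0)"
    using ortho norm_eq_1 by (auto simp: orthogonal_def pairwise_def)
  define f where "f = (\<lambda>v. \<Sum>b\<in>B. (v \<bullet> b) *\<^sub>R b)"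
  have lf: "linear f" unfolding linear_iff f_def
    by (simp add: inner_add_left scaleR_add_left sum.distrib scaleR_sum_right)
  have fS: "f v \<in> S" for v
    unfolding f_def by (metis (no_types, lifting) \<open>span B = S\<close> S subspace_sum span_base span_mul)
  have fo: "(v - f v) \<bullet> y = 0" if "y \<in> S" for v y
  proof -
    from \<open>span B = S\<close> span_finite [OF \<open>finite B\<close>] that
    obtain u where u: "y = (\<Sum>b\<in>B. u b *\<^sub>R b)" by auto
    have "b \<bullet> (v - f v) = 0" if "b \<in> B" for b
      using that \<open>finite B\<close> unfolding f_def
      by (simp add: * algebra_simps inner_sum_right if_distrib [of "(*)v" for v] inner_commute cong: if_cong)
    then show ?thesis
      by (simp add: u inner_sum_right inner_commute)
  qed
  show ?thesis
    apply (rule exI[of _ "matrix f"])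
    using fS fo by (simp add: isproj_def matrix_works linear_matrix_vector_mul_eq lf)
qed

context fixes S :: "(real^'n) set" and P assumes S: "subspace S" and P: "isproj S P"
begin
lemma proj_in: "P *v x \<in> S" using P by (simp add: isproj_def)
lemma proj_orth: "y \<in> S \<Longrightarrow> (x - P *v x) \<bullet> y = 0" using P by (simp add: isproj_def)
lemma proj_fix: assumes "x \<in> S" shows "P *v x = x"
proof -
  have "x - P *v x \<in> S" using assms proj_in S by (simp add: subspace_diff)
  then have "(x - P *v x) \<bullet> (x - P *v x) = 0" using proj_orth by blast
  thus ?thesis by simp
qed
lemma proj_sym_inner: "(P *v x) \<bullet> y = x \<bullet> (P *v y)"
proof -
  have "(y - P *v y) \<bullet> (P *v x) = 0" by (rule proj_orth[OF proj_in])
  then have "(P *v x) \<bullet> y = (P *v x) \<bullet> (P *v y)"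
    by (simp add: inner_diff_left inner_diff_right inner_commute)
  also have "(x - P *v x) \<bullet> (P *v y) = 0" by (rule proj_orth[OF proj_in])
  then have "(P *v x) \<bullet> (P *v y) = x \<bullet> (P *v y)"
    by (simp add: inner_diff_left inner_diff_right inner_commute)
  finally show ?thesis .
qed
lemma proj_transpose: "transpose P = P"
  by (simp add: matrix_eq, intro allI vec_eq_by_inner)
     (metis dot_lmul_matrix proj_sym_inner inner_commute)
lemma proj_idem: "P ** P = P"
  by (simp add: matrix_eq, metis matrix_vector_mul_assoc proj_fix proj_in)
lemma proj_zero: assumes "\<And>y. y \<in> S \<Longrightarrow> x \<bullet> y = 0" shows "P *v x = 0"
proof -
  have "(P *v x) \<bullet> (P *v x) = 0"
    using proj_orth[OF proj_in, of x] assms[OF proj_in] by (simp add: inner_diff_left)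
  thus ?thesis by simp
qed
end


lemma subspace_rowspace: "subspace (rowspace X)"
  unfolding rowspace_def by (intro real_vector.linear_subspace_image subspace_UNIV matrix_vector_mul_linear)

lemma subspace_colspace: "subspace (range (\<lambda>x. (X::real^'d^'n) *v x))"
  by (intro real_vector.linear_subspace_image subspace_UNIV matrix_vector_mul_linear)

lemma ker_iff: fixes X :: "real^'d^'n"
  shows "X *v w = 0 \<longleftrightarrow> (\<forall>y\<in>rowspace X. w \<bullet> y = 0)"
proof
  assume "X *v w = 0" then show "\<forall>y\<in>rowspace X. w \<bullet> y = 0"
    by (auto simp: rowspace_def) (metis dot_lmul_matrix inner_commute inner_zero_right)
next
  assume "\<forall>y\<in>rowspace X. w \<bullet> y = 0"
  then have "w \<bullet> (transpose X *v (X *v w)) = 0" by (auto simp: rowspace_def)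
  then have "(X *v w) \<bullet> (X *v w) = 0" by (metis inner_commute transpose_inner)
  then show "X *v w = 0" by simp
qed

lemma penrose_unique:
  fixes A :: "real^'d^'n"
  assumes "A ** B ** A = A" "B ** A ** B = B" "transpose (A ** B) = A ** B" "transpose (B ** A) = B ** A"
      and "A ** C ** A = A" "C ** A ** C = C" "transpose (A ** C) = A ** C" "transpose (C ** A) = C ** A"
  shows "B = C"
proof -
  have 1: "B = B ** A ** C"
  proof -
    have "B = B ** (A ** B)" using assms(2) by (simp add: matrix_mul_assoc)
    also have "\<dots> = B ** transpose (A ** B)" using assms(3) by simp
    also have "\<dots> = B ** (transpose B ** transpose A)" by (simp add: matrix_transpose_mul)
    also have "transpose A = transpose (A ** C ** A)" using assms(5) by simp
    also have "\<dots> = transpose A ** transpose (A ** C)" by (simp add: matrix_transpose_mul)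
    also have "B ** (transpose B ** (transpose A ** transpose (A ** C))) =
       B ** transpose (A ** B) ** transpose (A ** C)" by (simp add: matrix_transpose_mul matrix_mul_assoc)
    also have "\<dots> = B ** (A ** B) ** (A ** C)" using assms(3,7) by simp
    also have "\<dots> = (B ** A ** B) ** A ** C" by (simp add: matrix_mul_assoc)
    also have "\<dots> = B ** A ** C" using assms(2) by simp
    finally show ?thesis .
  qed
  have 2: "C = B ** A ** C"
  proof -
    have "C = (C ** A) ** C" using assms(6) by simp
    also have "\<dots> = transpose (C ** A) ** C" using assms(8) by simp
    also have "\<dots> = transpose A ** transpose C ** C" by (simp add: matrix_transpose_mul)
    also have "transpose A = transpose (A ** B ** A)" using assms(1) by simp
    also have "\<dots> = transpose (B ** A) ** transpose A" by (simp add: matrix_transpose_mul matrix_mul_assoc)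
    also have "transpose (B ** A) ** transpose A ** transpose C ** C =
       transpose (B ** A) ** transpose (C ** A) ** C" by (simp add: matrix_transpose_mul matrix_mul_assoc)
    also have "\<dots> = (B ** A) ** (C ** A) ** C" using assms(4,8) by simp
    also have "\<dots> = B ** A ** (C ** A ** C)" by (simp add: matrix_mul_assoc)
    also have "\<dots> = B ** A ** C" using assms(6) by simp
    finally show ?thesis .
  qed
  from 1 2 show ?thesis by simp
qed

lemma pinv_proj:
  fixes X :: "real^'d^'n"
  shows "isproj (rowspace X) (pinv X ** X)"
proof -
  let ?R = "rowspace X" and ?C = "range (\<lambda>x. X *v x)"
  obtain QR where QR: "isproj ?R QR" using isproj_exists[OF subspace_rowspace] by blast
  obtain QC where QC: "isproj ?C QC" using isproj_exists[OF subspace_colspace] by blast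
  have injR: "inj_on (\<lambda>x. X *v x) ?R"
  proof (rule inj_onI)
    fix x y assume x: "x \<in> ?R" and y: "y \<in> ?R" and e: "X *v x = X *v y"
    have "X *v (x - y) = 0" using e by (simp add: matrix_vector_mult_diff_distrib)
    then have "(x - y) \<bullet> (x - y) = 0" using ker_iff subspace_diff[OF subspace_rowspace x y] by blast
    then show "x = y" by simp
  qed
  obtain g where grange: "range g \<subseteq> ?R" and lg: "linear g" and gf: "\<forall>v\<in>?R. g (X *v v) = v"
    using real_vector.linear_exists_left_inverse_on[OF matrix_vector_mul_linear subspace_rowspace injR] by blast
  have XQR: "X *v (QR *v x) = X *v x" for x
  proof -
    have "X *v (x - QR *v x) = 0"
      unfolding ker_iff using proj_orth[OF subspace_rowspace QR] by blast
    then show ?thesis by (simp add: matrix_vector_mult_diff_distrib)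
  qed
  define B where "B = matrix (\<lambda>y. g (QC *v y))"
  have lB: "linear (\<lambda>y. g (QC *v y))"
    using linear_compose[OF matrix_vector_mul_linear lg] by (simp add: o_def)
  have Bv: "B *v y = g (QC *v y)" for y
    unfolding B_def using lB by (simp add: matrix_works linear_matrix_vector_mul_eq)
  have BX: "B ** X = QR"
  proof (simp add: matrix_eq, intro allI)
    fix x
    have "QC *v (X *v x) = X *v x" by (rule proj_fix[OF subspace_colspace QC]) auto
    then have "(B ** X) *v x = g (X *v (QR *v x))" by (simp add: Bv XQR matrix_vector_mul_assoc[symmetric])
    also have "\<dots> = QR *v x" using gf proj_in[OF subspace_rowspace QR] by blast
    finally show "(B ** X) *v x = QR *v x" .
  qed
  have XB: "X ** B = QC"
  proof (simp add: matrix_eq, intro allI)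
    fix y
    obtain z where z: "QC *v y = X *v z" using proj_in[OF subspace_colspace QC] by blast
    have "(X ** B) *v y = X *v g (X *v (QR *v z))" by (simp add: Bv z XQR matrix_vector_mul_assoc[symmetric])
    also have "\<dots> = X *v (QR *v z)" using gf proj_in[OF subspace_rowspace QR] by metis
    also have "\<dots> = QC *v y" by (simp add: XQR z)
    finally show "(X ** B) *v y = QC *v y" .
  qed
  have P1: "X ** B ** X = X"
    by (simp add: XB matrix_eq matrix_vector_mul_assoc[symmetric])
       (intro allI proj_fix[OF subspace_colspace QC], auto)
  have P2: "B ** X ** B = B"
    by (simp add: BX matrix_eq matrix_vector_mul_assoc[symmetric] Bv)
       (intro allI proj_fix[OF subspace_rowspace QR], use grange in auto)
  have P3: "transpose (X ** B) = X ** B" using proj_transpose[OF subspace_colspace QC] XB by simp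
  have P4: "transpose (B ** X) = B ** X" using proj_transpose[OF subspace_rowspace QR] BX by simp
  have "pinv X = B"
    unfolding pinv_def
    apply (rule the_equality)
    using P1 P2 P3 P4 apply blast
    using penrose_unique P1 P2 P3 P4 by blast
  then show ?thesis using BX QR by simp
qed


lemma kerproj_v: "kerproj X *v w = w - (pinv X ** X) *v w"
  by (simp add: kerproj_def matrix_vector_mult_diff_rdistrib)

lemma X_Q: fixes X :: "real^'d^'n" shows "X *v ((pinv X ** X) *v v) = X *v v"
proof -
  have "X *v (v - (pinv X ** X) *v v) = 0"
    unfolding ker_iff using proj_orth[OF subspace_rowspace pinv_proj] by blast
  then show ?thesis by (simp add: matrix_vector_mult_diff_distrib)
qed

lemma X_kerproj: fixes X :: "real^'d^'n" shows "X *v (kerproj X *v v) = 0"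
  by (simp add: kerproj_v matrix_vector_mult_diff_distrib X_Q)

lemma iter2_eq:
  fixes X1 :: "real^'d^'n1" and X2 :: "real^'d^'n2"
  shows "iter2 X1 (X1 *v w) X2 (X2 *v w) = w - (kerproj X2 ** kerproj X1) *v w"
  by (simp add: iter2_def cl_step_def kerproj_v matrix_vector_mul_assoc[symmetric]
      matrix_vector_mult_diff_distrib algebra_simps)

lemma forgetting_eq:
  fixes X1 :: "real^'d^'n1" and X2 :: "real^'d^'n2"
  shows "forgetting2 X1 (X1 *v w) X2 (X2 *v w) = (1/2) * (norm ((X1 ** kerproj X2 ** kerproj X1) *v w))\<^sup>2"
proof -
  let ?v = "kerproj X1 *v w"
  have a: "X1 *v iter2 X1 (X1 *v w) X2 (X2 *v w) - X1 *v w = - ((X1 ** kerproj X2 ** kerproj X1) *v w)"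
    by (simp add: iter2_eq matrix_vector_mult_diff_distrib matrix_vector_mul_assoc[symmetric])
  have b: "X2 *v iter2 X1 (X1 *v w) X2 (X2 *v w) - X2 *v w = 0"
    by (simp add: iter2_eq matrix_vector_mult_diff_distrib matrix_vector_mul_assoc[symmetric] X_kerproj)
  show ?thesis unfolding forgetting2_def Let_def a b by simp
qed

lemma part1:
  fixes X1 :: "real^'d^'n1" and X2 :: "real^'d^'n2"
  assumes "specnorm X1 \<le> 1" and "specnorm X2 \<le> 1"
  shows "(\<forall>y1 y2. in_S2 X1 y1 X2 y2 \<longrightarrow> forgetting2 X1 y1 X2 y2 = 0)
          \<longleftrightarrow> X1 ** kerproj X2 ** kerproj X1 = 0"
proof
  assume H: "\<forall>y1 y2. in_S2 X1 y1 X2 y2 \<longrightarrow> forgetting2 X1 y1 X2 y2 = 0"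
  show "X1 ** kerproj X2 ** kerproj X1 = 0"
  proof (simp add: matrix_eq, intro allI)
    fix z :: "real^'d"
    define c where "c = norm z + 1"
    have c: "c > 0" unfolding c_def by (simp add: add_nonneg_pos)
    define w where "w = (1/c) *\<^sub>R z"
    have "norm w \<le> 1" using c unfolding w_def c_def by (simp add: divide_simps)
    then have "in_S2 X1 (X1 *v w) X2 (X2 *v w)" using assms unfolding in_S2_def by blast
    then have "forgetting2 X1 (X1 *v w) X2 (X2 *v w) = 0" using H by blast
    then have "(X1 ** kerproj X2 ** kerproj X1) *v w = 0" by (simp add: forgetting_eq)
    moreover have "z = c *\<^sub>R w" using c unfolding w_def by simp
    ultimately show "(X1 ** kerproj X2 ** kerproj X1) *v z = 0"
      by (simp add: matrix_vector_mult_scaleR)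
  qed
next
  assume "X1 ** kerproj X2 ** kerproj X1 = 0"
  then show "\<forall>y1 y2. in_S2 X1 y1 X2 y2 \<longrightarrow> forgetting2 X1 y1 X2 y2 = 0"
    unfolding in_S2_def by (auto simp: forgetting_eq)
qed

lemma part2a:
  fixes X1 :: "real^'d^'n1" and X2 :: "real^'d^'n2"
  shows "X1 ** kerproj X2 ** kerproj X1 = 0 \<longleftrightarrow>
     (\<forall>x\<in>rowspace X1. (pinv X2 ** X2) *v x \<in> rowspace X1)"
proof -
  let ?U = "rowspace X1" and ?Q1 = "pinv X1 ** X1" and ?Q2 = "pinv X2 ** X2"
  have U: "subspace ?U" by (rule subspace_rowspace)
  have Q1: "isproj ?U ?Q1" by (rule pinv_proj)
  have Q2: "isproj (rowspace X2) ?Q2" by (rule pinv_proj)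
  have Mv: "(X1 ** kerproj X2 ** kerproj X1) *v z = X1 *v ((z - ?Q1 *v z) - ?Q2 *v (z - ?Q1 *v z))" for z
    by (simp add: kerproj_v matrix_vector_mul_assoc[symmetric])
  show ?thesis
  proof
    assume M: "X1 ** kerproj X2 ** kerproj X1 = 0"
    show "\<forall>x\<in>?U. ?Q2 *v x \<in> ?U"
    proof
      fix x assume x: "x \<in> ?U"
      let ?v = "?Q2 *v x"
      have "(?v - ?Q1 *v ?v) \<bullet> ?v = 0"
      proof -
        let ?a = "?v - ?Q1 *v ?v"
        have ao: "\<forall>y\<in>?U. ?a \<bullet> y = 0" using proj_orth[OF U Q1] by blast
        have "?Q1 *v ?a = 0" using proj_zero[OF U Q1] ao by blast
        then have "X1 *v (?a - ?Q2 *v ?a) = 0" using M Mv[of ?a] by (simp add: matrix_eq)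
        then have "(?a - ?Q2 *v ?a) \<bullet> x = 0" using ker_iff x by blast
        moreover have "?a \<bullet> x = 0" using ao x by blast
        ultimately have "(?Q2 *v ?a) \<bullet> x = 0" by (simp add: inner_diff_left)
        then show ?thesis by (simp add: proj_sym_inner[OF subspace_rowspace Q2] inner_commute)
      qed
      moreover have "(?v - ?Q1 *v ?v) \<bullet> (?Q1 *v ?v) = 0" using proj_orth[OF U Q1 proj_in[OF U Q1]] by blast
      ultimately have "(?v - ?Q1 *v ?v) \<bullet> (?v - ?Q1 *v ?v) = 0" by (simp add: inner_diff_right)
      then have "?v = ?Q1 *v ?v" by simp
      then show "?v \<in> ?U" using proj_in[OF U Q1] by metis
    qed
  next
    assume K: "\<forall>x\<in>?U. ?Q2 *v x \<in> ?U"
    show "X1 ** kerproj X2 ** kerproj X1 = 0"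
    proof (simp add: matrix_eq, intro allI)
      fix z
      let ?a = "z - ?Q1 *v z"
      have ao: "\<forall>y\<in>?U. ?a \<bullet> y = 0" using proj_orth[OF U Q1] by blast
      have "\<forall>y\<in>?U. (?a - ?Q2 *v ?a) \<bullet> y = 0"
      proof
        fix y assume y: "y \<in> ?U"
        have "(?Q2 *v ?a) \<bullet> y = ?a \<bullet> (?Q2 *v y)" by (rule proj_sym_inner[OF subspace_rowspace Q2])
        also have "\<dots> = 0" using ao K y by blast
        finally show "(?a - ?Q2 *v ?a) \<bullet> y = 0" using ao y by (simp add: inner_diff_left)
      qed
      then have "X1 *v (?a - ?Q2 *v ?a) = 0" using ker_iff by blast
      then show "(X1 ** kerproj X2 ** kerproj X1) *v z = 0" using Mv by simp
    qed
  qed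
qed


lemma exists_orth_unit:
  fixes U :: "(real^'d) set" and w :: "nat \<Rightarrow> real^'d"
  assumes U: "subspace U" and wU: "\<forall>j<k. w j \<in> U" and k: "k < dim U"
  shows "\<exists>x\<in>U. norm x = 1 \<and> (\<forall>j<k. x \<bullet> w j = 0)"
proof -
  let ?W = "span (w ` {..<k})"
  have dW: "dim ?W \<le> k"
    using dim_le_card[of ?W "w ` {..<k}"] card_image_le[of "{..<k}" w] by simp
  have WU: "?W \<subseteq> U" using span_minimal[of "w ` {..<k}" U] wU U by auto
  have "\<not> U \<subseteq> ?W" using dim_subset[of U ?W] dW k by linarith
  then obtain z where z: "z \<in> U" "z \<notin> ?W" by blast
  obtain P where P: "isproj ?W P" using isproj_exists[OF subspace_span] by blast
  define x0 where "x0 = z - P *v z"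
  have x0U: "x0 \<in> U" unfolding x0_def using z(1) proj_in[OF subspace_span P] WU U
    by (meson subsetD subspace_diff)
  have x0n: "x0 \<noteq> 0" unfolding x0_def using z(2) proj_in[OF subspace_span P] by (metis eq_iff_diff_eq_0)
  have x0o: "x0 \<bullet> w j = 0" if "j < k" for j
    unfolding x0_def using that by (intro proj_orth[OF subspace_span P]) (auto intro: span_base)
  show ?thesis
    apply (rule bexI[of _ "(1 / norm x0) *\<^sub>R x0"])
    using x0n x0o x0U U by (auto simp: subspace_scale)
qed

lemma pv_exists:
  fixes U V :: "(real^'d) set"
  assumes U: "subspace U" and V: "subspace V"
  shows "r \<le> dim U \<Longrightarrow> r \<le> dim V \<Longrightarrow> \<exists>u v. principal_vectors U V r u v"
proof (induction r)
  case 0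
  then show ?case by (simp add: principal_vectors_def)
next
  case (Suc k)
  then obtain u v where uv: "principal_vectors U V k u v" by auto
  have uU: "\<forall>j<k. u j \<in> U" and vV: "\<forall>j<k. v j \<in> V" using uv by (auto simp: principal_vectors_def)
  define F where "F = {p :: (real^'d) \<times> (real^'d). fst p \<in> U \<and> snd p \<in> V \<and> norm (fst p) = 1 \<and> norm (snd p) = 1 \<and>
       (\<forall>j<k. fst p \<bullet> u j = 0 \<and> snd p \<bullet> v j = 0)}"
  have Feq: "F = (sphere 0 1 \<times> sphere 0 1) \<inter> ((U \<times> V) \<inter> {p. \<forall>j. j < k \<longrightarrow> fst p \<bullet> u j = 0 \<and> snd p \<bullet> v j = 0})"
    unfolding F_def by auto
  have "closed {p :: (real^'d) \<times> (real^'d). \<forall>j. j < k \<longrightarrow> fst p \<bullet> u j = 0 \<and> snd p \<bullet> v j = 0}"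
  proof (intro closed_Collect_all)
    fix j
    show "closed {p :: (real^'d) \<times> (real^'d). j < k \<longrightarrow> fst p \<bullet> u j = 0 \<and> snd p \<bullet> v j = 0}"
    proof (cases "j < k")
      case True
      have "closed {p :: (real^'d) \<times> (real^'d). fst p \<bullet> u j = 0} \<and> closed {p :: (real^'d) \<times> (real^'d). snd p \<bullet> v j = 0}"
        by (intro conjI closed_Collect_eq continuous_intros)
      then have "closed ({p :: (real^'d) \<times> (real^'d). fst p \<bullet> u j = 0} \<inter> {p. snd p \<bullet> v j = 0})" by blast
      moreover have "{p :: (real^'d) \<times> (real^'d). j < k \<longrightarrow> fst p \<bullet> u j = 0 \<and> snd p \<bullet> v j = 0} =
          {p :: (real^'d) \<times> (real^'d). fst p \<bullet> u j = 0} \<inter> {p. snd p \<bullet> v j = 0}" using True by auto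
      ultimately show ?thesis by simp
    qed simp
  qed
  moreover have "closed (U \<times> V)" by (intro closed_Times closed_subspace U V)
  ultimately have cF: "compact F" unfolding Feq
    by (intro compact_Int_closed compact_Times compact_sphere closed_Int)
  obtain x where "x \<in> U" "norm x = 1" "\<forall>j<k. x \<bullet> u j = 0"
    using exists_orth_unit[OF U uU] Suc.prems by auto
  moreover obtain y where "y \<in> V" "norm y = 1" "\<forall>j<k. y \<bullet> v j = 0"
    using exists_orth_unit[OF V vV] Suc.prems by auto
  ultimately have "(x, y) \<in> F" unfolding F_def by auto
  then have "F \<noteq> {}" by blast
  moreover have "continuous_on F (\<lambda>p. \<bar>fst p \<bullet> snd p\<bar>)" by (intro continuous_intros)
  ultimately obtain p where pF: "p \<in> F" and pmax: "\<forall>q\<in>F. \<bar>fst q \<bullet> snd q\<bar> \<le> \<bar>fst p \<bullet> snd p\<bar>"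
    using continuous_attains_sup[OF cF] by blast
  define u' where "u' = u(k := fst p)"
  define v' where "v' = v(k := snd p)"
  have "principal_vectors U V (Suc k) u' v'"
    unfolding principal_vectors_def
  proof (intro allI impI)
    fix i assume i: "i < Suc k"
    show "u' i \<in> U \<and> v' i \<in> V \<and> norm (u' i) = 1 \<and> norm (v' i) = 1 \<and>
        (\<forall>j<i. u' i \<bullet> u' j = 0 \<and> v' i \<bullet> v' j = 0) \<and>
        (\<forall>x y. x \<in> U \<and> y \<in> V \<and> norm x = 1 \<and> norm y = 1 \<and>
               (\<forall>j<i. x \<bullet> u' j = 0 \<and> y \<bullet> v' j = 0) \<longrightarrow> \<bar>x \<bullet> y\<bar> \<le> \<bar>u' i \<bullet> v' i\<bar>)"
    proof (cases "i < k")
      case True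
      have e: "\<forall>j\<le>i. u' j = u j \<and> v' j = v j" using True unfolding u'_def v'_def by auto
      have "u i \<in> U \<and> v i \<in> V \<and> norm (u i) = 1 \<and> norm (v i) = 1 \<and>
        (\<forall>j<i. u i \<bullet> u j = 0 \<and> v i \<bullet> v j = 0) \<and>
        (\<forall>x y. x \<in> U \<and> y \<in> V \<and> norm x = 1 \<and> norm y = 1 \<and>
               (\<forall>j<i. x \<bullet> u j = 0 \<and> y \<bullet> v j = 0) \<longrightarrow> \<bar>x \<bullet> y\<bar> \<le> \<bar>u i \<bullet> v i\<bar>)"
        using uv True unfolding principal_vectors_def by blast
      then show ?thesis using e by (metis less_imp_le order_refl)
    next
      case False
      then have ik: "i = k" using i by simp
      have e: "\<forall>j<k. u' j = u j \<and> v' j = v j" unfolding u'_def v'_def by auto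
      show ?thesis using pF pmax e unfolding ik F_def by (auto simp: u'_def v'_def)
    qed
  qed
  then show ?case by blast
qed


lemma orth_count:
  fixes U :: "(real^'d) set" and w :: "nat \<Rightarrow> real^'d"
  assumes U: "subspace U" and x: "x \<in> U" "x \<noteq> 0" and wU: "\<forall>j<n. w j \<in> U"
    and wn: "\<forall>j<n. norm (w j) = 1" and wo: "\<forall>i<n. \<forall>j<n. i \<noteq> j \<longrightarrow> w i \<bullet> w j = 0"
    and xo: "\<forall>j<n. x \<bullet> w j = 0"
  shows "n < dim U"
proof -
  let ?S = "insert x (w ` {..<n})"
  have inj: "inj_on w {..<n}"
  proof (rule inj_onI)
    fix i j assume "i \<in> {..<n}" "j \<in> {..<n}" "w i = w j"
    then show "i = j" using wo wn by (metis lessThan_iff norm_eq_1 zero_neq_one)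
  qed
  have xn: "x \<notin> w ` {..<n}" using xo x(2) by auto
  have card: "card ?S = Suc n" using inj xn by (simp add: card_image)
  have "pairwise orthogonal ?S"
    unfolding pairwise_def orthogonal_def using wo xo by (auto simp: inner_commute)
  moreover have "0 \<notin> ?S" using x(2) wn by auto
  ultimately have "independent ?S" by (rule pairwise_orthogonal_independent)
  moreover have "?S \<subseteq> U" using x wU by auto
  ultimately have "card ?S \<le> dim U" by (metis independent_card_le_dim)
  then show ?thesis using card by simp
qed

locale pvsetup =
  fixes U V :: "(real^'d) set" and Q :: "real^'d^'d" and r :: nat and u v :: "nat \<Rightarrow> real^'d"
  assumes U: "subspace U" and V: "subspace V" and Q: "isproj V Q"
    and pv: "principal_vectors U V r u v" and r: "r = min (dim U) (dim V)"
begin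

abbreviation "\<sigma> i \<equiv> \<bar>u i \<bullet> v i\<bar>"

lemma pvi: assumes "i < r"
  shows "u i \<in> U" "v i \<in> V" "norm (u i) = 1" "norm (v i) = 1" "\<forall>j<i. u i \<bullet> u j = 0 \<and> v i \<bullet> v j = 0"
  using pv assms unfolding principal_vectors_def by blast+

lemma pvmax: assumes "i < r" "x \<in> U" "y \<in> V" "norm x = 1" "norm y = 1" "\<forall>j<i. x \<bullet> u j = 0 \<and> y \<bullet> v j = 0"
  shows "\<bar>x \<bullet> y\<bar> \<le> \<sigma> i"
  using pv assms unfolding principal_vectors_def by blast

lemma sigma_le1: assumes "i < r" shows "\<sigma> i \<le> 1"
  using Cauchy_Schwarz_ineq2[of "u i" "v i"] pvi[OF assms] by simp

lemma sigma_one: assumes "i < r" "\<sigma> i = 1" shows "v i = u i \<or> v i = - u i"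
  using norm_cauchy_schwarz_abs_eq[of "u i" "v i"] pvi[OF assms(1)] assms(2) by simp

lemma sigma_one_V: assumes "i < r" "\<sigma> i = 1" shows "u i \<in> V"
  using sigma_one[OF assms] pvi[OF assms(1)] V by (metis minus_minus subspace_neg)

lemma uorth: assumes "i < r" "j < r" "i \<noteq> j" shows "u i \<bullet> u j = 0"
proof (cases "j < i")
  case True then show ?thesis using pvi(5)[OF assms(1)] by blast
next
  case False then have "i < j" using assms(3) by simp
  then show ?thesis using pvi(5)[OF assms(2)] by (metis inner_commute)
qed

lemma dirA:
  assumes K: "\<forall>x\<in>U. Q *v x \<in> U"
  shows "\<forall>i<r. \<sigma> i = 0 \<or> \<sigma> i = 1"
proof -
  have "i < r \<longrightarrow> \<sigma> i = 0 \<or> \<sigma> i = 1" for i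
  proof (induction i rule: less_induct)
    case (less i)
    show ?case
    proof
      assume ir: "i < r"
      show "\<sigma> i = 0 \<or> \<sigma> i = 1"
      proof (cases "\<exists>j<i. \<sigma> j = 0")
        case True
        then obtain j where j: "j < i" "\<sigma> j = 0" by blast
        have "\<sigma> i \<le> \<sigma> j"
          using pvmax[of j "u i" "v i"] pvi[OF ir] j ir by auto
        then show ?thesis using j by simp
      next
        case False
        then have one: "\<forall>j<i. \<sigma> j = 1" using less.IH ir by auto
        show ?thesis
        proof (cases "\<sigma> i = 0")
          case True then show ?thesis by simp
        next
          case False
          let ?q = "Q *v u i"
          have "u i \<bullet> v i = u i \<bullet> (Q *v v i)" using proj_fix[OF V Q pvi(2)[OF ir]] by simp
          also have "\<dots> = ?q \<bullet> v i" by (simp add: proj_sym_inner[OF V Q])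
          finally have "?q \<noteq> 0" using False by auto
          have qU: "?q \<in> U" using K pvi(1)[OF ir] by blast
          have qV: "?q \<in> V" by (rule proj_in[OF V Q])
          have qo: "?q \<bullet> u j = 0 \<and> ?q \<bullet> v j = 0" if "j < i" for j
          proof -
            have jr: "j < r" using that ir by simp
            have "?q \<bullet> u j = u i \<bullet> (Q *v u j)" by (simp add: proj_sym_inner[OF V Q])
            also have "\<dots> = u i \<bullet> u j" using proj_fix[OF V Q sigma_one_V[OF jr]] one that by simp
            also have "\<dots> = 0" using pvi(5)[OF ir] that by blast
            finally have a: "?q \<bullet> u j = 0" .
            have "v j = u j \<or> v j = - u j" using sigma_one[OF jr] one that by blast
            then show ?thesis using a by auto
          qed
          define e where "e = (1 / norm ?q) *\<^sub>R ?q"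
          have en: "norm e = 1" unfolding e_def using \<open>?q \<noteq> 0\<close> by simp
          have "\<bar>e \<bullet> e\<bar> \<le> \<sigma> i"
            apply (rule pvmax[OF ir])
            using qU qV qo en U V unfolding e_def by (auto simp: subspace_scale)
          moreover have "e \<bullet> e = 1" using en by (simp add: norm_eq_1[symmetric])
          ultimately show ?thesis using sigma_le1[OF ir] by simp
        qed
      qed
    qed
  qed
  then show ?thesis by blast
qed

lemma dirB:
  assumes H: "\<forall>i<r. \<sigma> i = 0 \<or> \<sigma> i = 1"
  shows "\<forall>x\<in>U. Q *v x \<in> U"
proof -
  define i0 where "i0 = (if \<exists>i<r. \<sigma> i = 0 then LEAST i. i < r \<and> \<sigma> i = 0 else r)"
  have i0r: "i0 \<le> r"
    unfolding i0_def by (auto intro: LeastI2_ex)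
  have one: "\<sigma> j = 1" if "j < i0" for j
  proof -
    have jr: "j < r" using that i0r by simp
    have "\<sigma> j \<noteq> 0"
    proof
      assume "\<sigma> j = 0"
      then have "\<exists>i<r. \<sigma> i = 0" using jr by blast
      then have "i0 \<le> j" unfolding i0_def using jr \<open>\<sigma> j = 0\<close> by (auto intro: Least_le)
      then show False using that by simp
    qed
    then show ?thesis using H jr by blast
  qed
  have zero: "\<sigma> i0 = 0" if "i0 < r"
    using that unfolding i0_def by (auto split: if_splits intro: LeastI2_ex)
  have uUV: "u j \<in> U \<and> u j \<in> V" if "j < i0" for j
    using pvi(1) sigma_one_V one that i0r by (meson less_le_trans)
  have vpm: "v j = u j \<or> v j = - u j" if "j < i0" for j
    using sigma_one one that i0r by (meson less_le_trans)
  have C: "x \<bullet> y = 0" if x: "x \<in> U" and y: "y \<in> V" and xo: "\<forall>j<i0. x \<bullet> u j = 0" and yo: "\<forall>j<i0. y \<bullet> u j = 0" for x y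
  proof (cases "x = 0 \<or> y = 0")
    case True then show ?thesis by auto
  next
    case False
    show ?thesis
    proof (cases "i0 < r")
      case True
      define x' where "x' = (1 / norm x) *\<^sub>R x"
      define y' where "y' = (1 / norm y) *\<^sub>R y"
      have yv: "y' \<bullet> v j = 0" if "j < i0" for j
        using vpm[OF that] yo that unfolding y'_def by auto
      have "\<bar>x' \<bullet> y'\<bar> \<le> \<sigma> i0"
        apply (rule pvmax[OF True])
        using x y xo yv False U V unfolding x'_def y'_def by (auto simp: subspace_scale)
      then have "x' \<bullet> y' = 0" using zero[OF True] by simp
      then show ?thesis using False unfolding x'_def y'_def by simp
    next
      case False
      then have ir: "i0 = r" using i0r by simp
      have wn: "\<forall>j<r. norm (u j) = 1" using pvi(3) by blast
      have wo: "\<forall>i<r. \<forall>j<r. i \<noteq> j \<longrightarrow> u i \<bullet> u j = 0" using uorth by blast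
      have "r < dim U" using orth_count[OF U x _ _ wn wo] \<open>\<not> (x = 0 \<or> y = 0)\<close> xo uUV ir by auto
      moreover have "r < dim V" using orth_count[OF V y _ _ wn wo] \<open>\<not> (x = 0 \<or> y = 0)\<close> yo uUV ir by auto
      ultimately show ?thesis using r by simp
    qed
  qed
  let ?W = "span (u ` {..<i0})"
  obtain PW where PW: "isproj ?W PW" using isproj_exists[OF subspace_span] by blast
  have WU: "?W \<subseteq> U" using span_minimal[of "u ` {..<i0}" U] uUV U by auto
  have WV: "?W \<subseteq> V" using span_minimal[of "u ` {..<i0}" V] uUV V by auto
  have orthW: "(z - PW *v z) \<bullet> u j = 0" if "j < i0" for z j
    using that by (intro proj_orth[OF subspace_span PW]) (auto intro: span_base)
  show ?thesis
  proof
    fix x assume x: "x \<in> U"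
    let ?w = "PW *v x" and ?x' = "x - PW *v x"
    have wW: "?w \<in> ?W" by (rule proj_in[OF subspace_span PW])
    have x'U: "?x' \<in> U" using x wW WU U by (meson subsetD subspace_diff)
    have x'V: "?x' \<bullet> y = 0" if y: "y \<in> V" for y
    proof -
      have "?x' \<bullet> (PW *v y) = 0" using proj_orth[OF subspace_span PW proj_in[OF subspace_span PW]] .
      moreover have "?x' \<bullet> (y - PW *v y) = 0"
      proof (rule C[OF x'U])
        show "y - PW *v y \<in> V" using y proj_in[OF subspace_span PW] WV V by (meson subsetD subspace_diff)
      qed (use orthW in auto)
      ultimately show ?thesis by (simp add: inner_diff_right)
    qed
    have "Q *v ?x' = 0" using proj_zero[OF V Q] x'V by blast
    moreover have "Q *v ?w = ?w" using proj_fix[OF V Q] wW WV by blast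
    ultimately have "Q *v x = ?w"
      by (metis add_0 diff_add_cancel matrix_vector_right_distrib)
    then show "Q *v x \<in> U" using wW WU by auto
  qed
qed

end


lemma rank_rowspace: fixes X :: "real^'d^'n" shows "rank X = dim (rowspace X)"
  by (metis rank_transpose rank_dim_range rowspace_def)

theorem mainTheorem1:
  fixes X1 :: "real^'d^'n1" and X2 :: "real^'d^'n2"
  assumes "specnorm X1 \<le> 1" and "specnorm X2 \<le> 1"
    and "rank X1 < CARD('d)" and "rank X2 < CARD('d)"
  shows "((\<forall>y1 y2. in_S2 X1 y1 X2 y2 \<longrightarrow> forgetting2 X1 y1 X2 y2 = 0)
          \<longleftrightarrow> X1 ** kerproj X2 ** kerproj X1 = 0)
       \<and> (X1 ** kerproj X2 ** kerproj X1 = 0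
          \<longleftrightarrow> (\<forall>\<theta>\<in>set (principal_angles X1 X2). \<theta> = 0 \<or> \<theta> = pi / 2))"
proof
  show "(\<forall>y1 y2. in_S2 X1 y1 X2 y2 \<longrightarrow> forgetting2 X1 y1 X2 y2 = 0)
          \<longleftrightarrow> X1 ** kerproj X2 ** kerproj X1 = 0" using part1[OF assms(1,2)] .
  let ?U = "rowspace X1" and ?V = "rowspace X2" and ?Q = "pinv X2 ** X2"
  define r where "r = min (rank X1) (rank X2)"
  define uv where "uv = (SOME uv. principal_vectors ?U ?V r (fst uv) (snd uv))"
  have r': "r = min (dim ?U) (dim ?V)" unfolding r_def rank_rowspace ..
  have "\<exists>u v. principal_vectors ?U ?V r u v"
    by (rule pv_exists[OF subspace_rowspace subspace_rowspace]) (simp_all add: r')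
  then have "\<exists>uv. principal_vectors ?U ?V r (fst uv) (snd uv)" by simp
  then have pv: "principal_vectors ?U ?V r (fst uv) (snd uv)" unfolding uv_def by (rule someI_ex)
  interpret P: pvsetup ?U ?V ?Q r "fst uv" "snd uv"
    by unfold_locales (use subspace_rowspace pinv_proj pv r' in auto)
  have PA: "principal_angles X1 X2 = map (\<lambda>i. arccos \<bar>fst uv i \<bullet> snd uv i\<bar>) [0..<r]"
    unfolding principal_angles_def Let_def r_def uv_def ..
  have ang: "(arccos (P.\<sigma> i) = 0 \<or> arccos (P.\<sigma> i) = pi / 2) \<longleftrightarrow> (P.\<sigma> i = 0 \<or> P.\<sigma> i = 1)" if "i < r" for i
  proof -
    have b: "\<bar>P.\<sigma> i\<bar> \<le> 1" using P.sigma_le1[OF that] by simp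
    have "arccos (P.\<sigma> i) = arccos 1 \<longleftrightarrow> P.\<sigma> i = 1" using arccos_eq_iff[of "P.\<sigma> i" 1] b by simp
    moreover have "arccos (P.\<sigma> i) = arccos 0 \<longleftrightarrow> P.\<sigma> i = 0" using arccos_eq_iff[of "P.\<sigma> i" 0] b by simp
    ultimately show ?thesis by auto
  qed
  have "(\<forall>\<theta>\<in>set (principal_angles X1 X2). \<theta> = 0 \<or> \<theta> = pi / 2) \<longleftrightarrow> (\<forall>i<r. P.\<sigma> i = 0 \<or> P.\<sigma> i = 1)"
    unfolding PA using ang by auto
  also have "\<dots> \<longleftrightarrow> (\<forall>x\<in>?U. ?Q *v x \<in> ?U)" using P.dirA P.dirB by blast
  also have "\<dots> \<longleftrightarrow> X1 ** kerproj X2 ** kerproj X1 = 0" using part2a by blast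
  finally show "X1 ** kerproj X2 ** kerproj X1 = 0
          \<longleftrightarrow> (\<forall>\<theta>\<in>set (principal_angles X1 X2). \<theta> = 0 \<or> \<theta> = pi / 2)" by simp
qed


end
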